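(* Fix $\rho\in(0,1)$. Any randomized sampling/histogramming partitioning algorithm (model in the context) that, for every input, achieves a $2$-balanced partition within a single superstep with probability greater than $\rho$ must use $\Omega(p\log p)$ samples, for all sufficiently large $p$ (and sufficiently large $N$).
   Context: Model: $N$ distinct keys from a totally ordered set (only comparisons available) are distributed across $p$ processors, $N/p$ keys per processor; $R(x)$ is the global rank of key $x$. The algorithm proceeds in supersteps. In each superstep, processors choose keys from their local inputs as samples (the choice may depend on local input, on all information made available in earlier supersteps, and on random bits); the global ranks of all samples are then computed and made known to all processors. At the end, the algorithm outputs splitters $s_1,\dots,s_{p-1}$ chosen among the sampled keys. With $R(s_0)=0$, $R(s_p)=N$, the partition is $2$-balanced if $R(s_{i+1})-R(s_i)\le 2\frac{N}{p}$ for all $i\in\{0,\dots,p-1\}$. *)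

theory Defs
  imports "HOL-Probability.Probability"
begin

text \<open>
Processor i < p holds
N div p keys; since only comparisons are available and nothing has been
communicated before the first superstep, a processor can only identify a local
key by its position j < N div p in its locally sorted input.  An input is
therefore described by the global ranks r i j (in 1..N) of the j-th smallest
key of processor i.
\<close>

definition valid_input :: "nat \<Rightarrow> nat \<Rightarrow> (nat \<Rightarrow> nat \<Rightarrow> nat) \<Rightarrow> bool" where
  "valid_input N p r \<longleftrightarrow>
     bij_betw (\<lambda>(i, j). r i j) ({..<p} \<times> {..<N div p}) {1..N} \<and>
     (\<forall>i<p. \<forall>j j'. j < j' \<and> j' < N div p \<longrightarrow> r i j < r i j')"

definition positions :: "nat \<Rightarrow> nat \<Rightarrow> (nat \<times> nat) set" where
  "positions N p = {..<p} \<times> {..<N div p}"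

text \<open>A deterministic single-superstep strategy: a set of sampled positions,
and a rule that picks the splitters (as positions) from the revealed
information, namely the global ranks of the samples.\<close>
type_synonym strategy =
  "(nat \<times> nat) set \<times> ((nat \<times> nat \<Rightarrow> nat option) \<Rightarrow> (nat \<times> nat) list)"

definition observation :: "(nat \<Rightarrow> nat \<Rightarrow> nat) \<Rightarrow> (nat \<times> nat) set \<Rightarrow> (nat \<times> nat \<Rightarrow> nat option)" where
  "observation r S = (\<lambda>(i, j). if (i, j) \<in> S then Some (r i j) else None)"

text \<open>2-balanced: splitter ranks rs = [R(s_1),...,R(s_{p-1})], R(s_0)=0, R(s_p)=N.\<close>
definition two_balanced :: "nat \<Rightarrow> nat \<Rightarrow> nat list \<Rightarrow> bool" where
  "two_balanced N p rs \<longleftrightarrow>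
     length rs = p - 1 \<and>
     (let R = 0 # rs @ [N] in
        \<forall>i<p. real (R ! (i + 1)) - real (R ! i) \<le> 2 * real N / real p)"

definition succeeds :: "nat \<Rightarrow> nat \<Rightarrow> (nat \<Rightarrow> nat \<Rightarrow> nat) \<Rightarrow> strategy \<Rightarrow> bool" where
  "succeeds N p r st =
     (let S = fst st; out = snd st (observation r S) in
        length out = p - 1 \<and> set out \<subseteq> S \<and>
        two_balanced N p (map (\<lambda>(i, j). r i j) out))"

text \<open>A randomized algorithm is a probability distribution over deterministic
strategies (random bits fixed in advance).\<close>

end

theory Submission
  imports Defs
begin

definition pos :: "nat set \<Rightarrow> nat \<Rightarrow> nat \<Rightarrow> nat" where
  "pos A p i = (if i \<in> A then card {k\<in>A. k < i} else card A + card {k. k < p \<and> k \<notin> A \<and> k < i})"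

lemma pos_lt:
  assumes "A \<subseteq> {..<p}" "i < p"
  shows "pos A p i < p"
proof (cases "i \<in> A")
  case True
  have fA: "finite A" using assms finite_subset by blast
  have "{k\<in>A. k < i} \<subset> A" using True by auto
  hence "card {k\<in>A. k < i} < card A" using fA psubset_card_mono by blast
  moreover have "card A \<le> p" using assms card_mono[of "{..<p}" A] by simp
  ultimately show ?thesis using True by (simp add: pos_def)
next
  case False
  have fA: "finite A" using assms finite_subset by blast
  have "{k. k < p \<and> k \<notin> A \<and> k < i} \<subset> {..<p} - A" using False assms by auto
  hence "card {k. k < p \<and> k \<notin> A \<and> k < i} < card ({..<p} - A)" by (simp add: psubset_card_mono)
  moreover have "card ({..<p} - A) = p - card A" using assms fA by (simp add: card_Diff_subset)
  moreover have "card A \<le> p" using assms card_mono[of "{..<p}" A] by simp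
  ultimately show ?thesis using False by (simp add: pos_def)
qed

lemma pos_lt_card_iff:
  assumes "A \<subseteq> {..<p}" "i < p"
  shows "pos A p i < card A \<longleftrightarrow> i \<in> A"
proof (cases "i \<in> A")
  case True
  have fA: "finite A" using assms finite_subset by blast
  have "{k\<in>A. k < i} \<subset> A" using True by auto
  hence "card {k\<in>A. k < i} < card A" using fA psubset_card_mono by blast
  then show ?thesis using True by (simp add: pos_def)
qed (simp add: pos_def)

lemma pos_inj:
  assumes "A \<subseteq> {..<p}"
  shows "inj_on (pos A p) {..<p}"
proof -
  have fA: "finite A" using assms finite_subset by blast
  have key: "pos A p i < pos A p i'" if "i < i'" "i' < p" "(i \<in> A) = (i' \<in> A)" for i i'
  proof (cases "i \<in> A")
    case True
    have s1: "{k\<in>A. k < i} \<subseteq> {k\<in>A. k < i'}" using that by auto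
    have s2: "i \<in> {k\<in>A. k < i'}" "i \<notin> {k\<in>A. k < i}" using True that by auto
    have "{k\<in>A. k < i} \<subset> {k\<in>A. k < i'}" using s1 s2 by blast
    hence "card {k\<in>A. k < i} < card {k\<in>A. k < i'}" using fA by (intro psubset_card_mono) auto
    then show ?thesis using True that by (simp add: pos_def)
  next
    case False
    have s1: "{k. k < p \<and> k \<notin> A \<and> k < i} \<subseteq> {k. k < p \<and> k \<notin> A \<and> k < i'}" using that by auto
    have s2: "i \<in> {k. k < p \<and> k \<notin> A \<and> k < i'}" "i \<notin> {k. k < p \<and> k \<notin> A \<and> k < i}" using False that by auto
    have "{k. k < p \<and> k \<notin> A \<and> k < i} \<subset> {k. k < p \<and> k \<notin> A \<and> k < i'}" using s1 s2 by blast
    hence "card {k. k < p \<and> k \<notin> A \<and> k < i} < card {k. k < p \<and> k \<notin> A \<and> k < i'}"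
      by (intro psubset_card_mono) auto
    then show ?thesis using False that by (simp add: pos_def)
  qed
  show ?thesis
  proof (rule inj_onI)
    fix i i' assume i: "i \<in> {..<p}" and i': "i' \<in> {..<p}" and eq: "pos A p i = pos A p i'"
    have "i < p" "i' < p" using i i' by auto
    have c1: "(i \<in> A) = (i' \<in> A)"
      using pos_lt_card_iff[OF assms \<open>i < p\<close>] pos_lt_card_iff[OF assms \<open>i' < p\<close>] eq by simp
    show "i = i'"
    proof (rule ccontr)
      assume "i \<noteq> i'"
      then consider "i < i'" | "i' < i" by linarith
      then show False
      proof cases
        case 1 then show False using key[of i i'] c1 \<open>i' < p\<close> eq by simp
      next
        case 2 then show False using key[of i' i] c1 \<open>i < p\<close> eq by simp
      qed
    qed
  qed
qed

definition rk :: "nat \<Rightarrow> nat \<Rightarrow> nat \<Rightarrow> (nat \<Rightarrow> nat set) \<Rightarrow> nat \<Rightarrow> nat \<Rightarrow> nat" where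
  "rk p n d A i j = (let L = n div d in
     if j < d * L then (j div L) * (p * L) + (pos (A (j div L)) p i * L + j mod L) + 1
     else d * (p * L) + (i * (n - d * L) + (j - d * L)) + 1)"

lemma decode:
  fixes a b a' b' m :: nat
  assumes "b < m" "b' < m" "a * m + b = a' * m + b'"
  shows "a = a' \<and> b = b'"
proof -
  have "a = (a * m + b) div m" using assms(1) by simp
  also have "\<dots> = (a' * m + b') div m" using assms(3) by simp
  also have "\<dots> = a'" using assms(2) by simp
  finally have 1: "a = a'" .
  have "b = (a * m + b) mod m" using assms(1) by simp
  also have "\<dots> = (a' * m + b') mod m" using assms(3) by simp
  also have "\<dots> = b'" using assms(2) by simp
  finally show ?thesis using 1 by simp
qed

lemma lowpart:
  fixes x r p L :: nat
  assumes "x < p" "r < L"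
  shows "x * L + r < p * L"
proof -
  have "x * L + r < x * L + L" using assms by simp
  also have "\<dots> = Suc x * L" by simp
  also have "\<dots> \<le> p * L" using assms(1) by (intro mult_le_mono1) simp
  finally show ?thesis .
qed

locale cfg =
  fixes p n d :: nat and A :: "nat \<Rightarrow> nat set"
  assumes d_pos: "0 < d" and d_le: "d \<le> n"
    and A_sub: "\<And>q. q < d \<Longrightarrow> A q \<subseteq> {..<p}"
begin

definition "L = n div d"

lemma L_pos: "0 < L"
  using d_pos d_le by (simp add: L_def div_greater_zero_iff)

lemma dL_le: "d * L \<le> n"
  unfolding L_def by simp

lemma rk_low:
  assumes "i < p" "j < d * L"
  shows "rk p n d A i j = (j div L) * (p * L) + (pos (A (j div L)) p i * L + j mod L) + 1"
    and "pos (A (j div L)) p i * L + j mod L < p * L"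
    and "j div L < d"
proof -
  show "rk p n d A i j = (j div L) * (p * L) + (pos (A (j div L)) p i * L + j mod L) + 1"
    using assms by (simp add: rk_def L_def[symmetric] Let_def)
  show jd: "j div L < d" using assms L_pos by (simp add: div_less_iff_less_mult)
  show "pos (A (j div L)) p i * L + j mod L < p * L"
    using lowpart pos_lt[OF A_sub[OF jd] assms(1)] L_pos by simp
qed

lemma rk_high:
  assumes "i < p" "\<not> j < d * L"
  shows "rk p n d A i j = d * (p * L) + (i * (n - d * L) + (j - d * L)) + 1"
  using assms by (simp add: rk_def L_def[symmetric] Let_def)

end

context cfg begin

lemma rk_low_bounds:
  assumes "i < p" "j < d * L"
  shows "(j div L) * (p * L) < rk p n d A i j" "rk p n d A i j \<le> (j div L) * (p * L) + p * L"
  using rk_low[OF assms] by auto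

lemma rk_low_le: assumes "i < p" "j < d * L" shows "rk p n d A i j \<le> d * (p * L)"
proof -
  have "rk p n d A i j \<le> (j div L) * (p * L) + p * L" by (rule rk_low_bounds(2)[OF assms])
  also have "\<dots> = Suc (j div L) * (p * L)" by simp
  also have "\<dots> \<le> d * (p * L)" using rk_low(3)[OF assms] by (intro mult_le_mono1) simp
  finally show ?thesis .
qed

lemma rk_high_bounds:
  assumes "i < p" "\<not> j < d * L" "j < n"
  shows "d * (p * L) < rk p n d A i j" "rk p n d A i j \<le> p * n"
proof -
  show "d * (p * L) < rk p n d A i j" using rk_high[OF assms(1,2)] by simp
  have "i * (n - d * L) + (j - d * L) < i * (n - d * L) + (n - d * L)" using assms dL_le by simp
  also have "\<dots> = Suc i * (n - d * L)" by simp
  also have "\<dots> \<le> p * (n - d * L)" using assms(1) by (intro mult_le_mono1) simp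
  finally have "i * (n - d * L) + (j - d * L) + 1 \<le> p * (n - d * L)" by simp
  hence "rk p n d A i j \<le> d * (p * L) + p * (n - d * L)" using rk_high[OF assms(1,2)] by simp
  also have "\<dots> = p * (d * L + (n - d * L))" by (simp add: algebra_simps)
  also have "\<dots> = p * n" using dL_le by simp
  finally show "rk p n d A i j \<le> p * n" .
qed

lemma rk_range:
  assumes "i < p" "j < n"
  shows "rk p n d A i j \<in> {1..p*n}"
proof (cases "j < d * L")
  case True
  have "rk p n d A i j \<le> d * (p * L)" by (rule rk_low_le[OF assms(1) True])
  also have "\<dots> \<le> p * n" using dL_le by (metis mult.left_commute mult_le_mono2)
  finally show ?thesis using rk_low(1)[OF assms(1) True] by simp
next
  case False
  then show ?thesis using rk_high_bounds[OF assms(1) False assms(2)] by simp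
qed

lemma rk_inj:
  assumes "i < p" "j < n" "i' < p" "j' < n" "rk p n d A i j = rk p n d A i' j'"
  shows "i = i' \<and> j = j'"
proof (cases "j < d * L")
  case T1: True
  show ?thesis
  proof (cases "j' < d * L")
    case T2: True
    let ?q = "j div L" and ?q' = "j' div L"
    have e: "?q * (p * L) + (pos (A ?q) p i * L + j mod L) = ?q' * (p * L) + (pos (A ?q') p i' * L + j' mod L)"
      using assms(5) rk_low(1)[OF assms(1) T1] rk_low(1)[OF assms(3) T2] by simp
    from decode[OF rk_low(2)[OF assms(1) T1] rk_low(2)[OF assms(3) T2] e]
    have q: "?q = ?q'" and e2: "pos (A ?q) p i * L + j mod L = pos (A ?q') p i' * L + j' mod L" by auto
    from decode[OF _ _ e2] L_pos have "pos (A ?q) p i = pos (A ?q) p i'" and m: "j mod L = j' mod L"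
      using q by auto
    hence "i = i'" using pos_inj[OF A_sub[OF rk_low(3)[OF assms(1) T1]]] assms(1,3)
      by (auto dest: inj_onD)
    moreover have "j = j'" using q m by (metis div_mult_mod_eq)
    ultimately show ?thesis by simp
  next
    case F2: False
    have "rk p n d A i j \<le> d * (p * L)" by (rule rk_low_le[OF assms(1) T1])
    moreover have "d * (p * L) < rk p n d A i' j'" by (rule rk_high_bounds(1)[OF assms(3) F2 assms(4)])
    ultimately show ?thesis using assms(5) by simp
  qed
next
  case F1: False
  show ?thesis
  proof (cases "j' < d * L")
    case T2: True
    have "rk p n d A i' j' \<le> d * (p * L)" by (rule rk_low_le[OF assms(3) T2])
    moreover have "d * (p * L) < rk p n d A i j" by (rule rk_high_bounds(1)[OF assms(1) F1 assms(2)])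
    ultimately show ?thesis using assms(5) by simp
  next
    case F2: False
    have e: "i * (n - d * L) + (j - d * L) = i' * (n - d * L) + (j' - d * L)"
      using assms(5) rk_high[OF assms(1) F1] rk_high[OF assms(3) F2] by simp
    have "j - d * L < n - d * L" "j' - d * L < n - d * L" using assms F1 F2 by auto
    from decode[OF this e] show ?thesis using F1 F2 by auto
  qed
qed

lemma rk_mono:
  assumes "i < p" "j < j'" "j' < n"
  shows "rk p n d A i j < rk p n d A i j'"
proof (cases "j' < d * L")
  case T2: True
  hence T1: "j < d * L" using assms by simp
  show ?thesis
  proof (cases "j div L = j' div L")
    case True
    have "j mod L < j' mod L" using assms(2) True by (metis div_mult_mod_eq nat_add_left_cancel_less)
    then show ?thesis using rk_low(1)[OF assms(1) T1] rk_low(1)[OF assms(1) T2] True by simp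
  next
    case False
    hence lt: "j div L < j' div L" using assms(2) div_le_mono[of j j' L] by simp
    have "rk p n d A i j \<le> (j div L) * (p * L) + p * L" by (rule rk_low_bounds(2)[OF assms(1) T1])
    also have "\<dots> = Suc (j div L) * (p * L)" by simp
    also have "\<dots> \<le> (j' div L) * (p * L)" using lt by (intro mult_le_mono1) simp
    also have "\<dots> < rk p n d A i j'" by (rule rk_low_bounds(1)[OF assms(1) T2])
    finally show ?thesis .
  qed
next
  case F2: False
  show ?thesis
  proof (cases "j < d * L")
    case True
    then show ?thesis using rk_low_le[OF assms(1) True] rk_high_bounds(1)[OF assms(1) F2 assms(3)] by simp
  next
    case False
    then show ?thesis using rk_high[OF assms(1) False] rk_high[OF assms(1) F2] assms by simp
  qed
qed

lemma rk_valid: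
  assumes "0 < p"
  shows "valid_input (p * n) p (rk p n d A)"
proof -
  have nd: "p * n div p = n" using assms by simp
  let ?f = "\<lambda>(i, j). rk p n d A i j"
  have inj: "inj_on ?f ({..<p} \<times> {..<n})"
    by (rule inj_onI) (auto dest: rk_inj)
  have sub: "?f ` ({..<p} \<times> {..<n}) \<subseteq> {1..p*n}" using rk_range by auto
  have "card (?f ` ({..<p} \<times> {..<n})) = card {1..p*n}"
    using card_image[OF inj] by (simp add: card_cartesian_product)
  hence "?f ` ({..<p} \<times> {..<n}) = {1..p*n}" using sub by (intro card_subset_eq) auto
  hence "bij_betw ?f ({..<p} \<times> {..<n}) {1..p*n}" using inj by (simp add: bij_betw_def)
  then show ?thesis unfolding valid_input_def nd using rk_mono by blast
qed

end

lemma chain_hit: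
  fixes R :: "nat list" and a W :: nat
  assumes step: "\<And>k. Suc k < length R \<Longrightarrow> R ! (Suc k) \<le> R ! k + W"
    and ne: "R \<noteq> []" and first: "R ! 0 \<le> a" and last: "a + W < R ! (length R - 1)"
  shows "\<exists>x\<in>set R. a < x \<and> x \<le> a + W"
proof (rule ccontr)
  assume "\<not> ?thesis"
  hence out: "\<And>k. k < length R \<Longrightarrow> R ! k \<le> a \<or> a + W < R ! k" by (meson linorder_not_le nth_mem)
  have "k < length R \<longrightarrow> R ! k \<le> a" for k
  proof (induction k)
    case 0 then show ?case using first by simp
  next
    case (Suc k)
    show ?case
    proof
      assume k: "Suc k < length R"
      hence "R ! k \<le> a" using Suc by simp
      hence "R ! Suc k \<le> a + W" using step[OF k] by simp
      then show "R ! Suc k \<le> a" using out[OF k] by simp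
    qed
  qed
  hence "R ! (length R - 1) \<le> a" using ne by simp
  then show False using last by simp
qed

definition Tq :: "nat \<Rightarrow> (nat \<times> nat) set \<Rightarrow> nat \<Rightarrow> nat set" where
  "Tq L S q = {i. \<exists>j. (i, j) \<in> S \<and> j < q * L + L \<and> q * L \<le> j}"

context cfg begin

lemma succ_hit:
  assumes p: "0 < p" and q: "q < d" and hL: "2 * n \<le> card (A q) * L" and hp: "card (A q) < p"
    and S: "fst st \<subseteq> positions (p * n) p"
    and succ: "succeeds (p * n) p (rk p n d A) st"
  shows "A q \<inter> Tq L (fst st) q \<noteq> {}"
proof -
  define S where "S = fst st"
  define out where "out = snd st (observation (rk p n d A) S)"
  define rs where "rs = map (\<lambda>(i, j). rk p n d A i j) out"
  define R where "R = 0 # rs @ [p * n]"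
  have nd: "p * n div p = n" using p by simp
  have len: "length out = p - 1" and outS: "set out \<subseteq> S" and tb: "two_balanced (p * n) p rs"
    using succ unfolding succeeds_def S_def out_def rs_def Let_def by auto
  have lenR: "length R = p + 1" using len p by (simp add: R_def rs_def)
  have ratio: "2 * real (p * n) / real p = real (2 * n)" using p by simp
  have stepR: "R ! Suc k \<le> R ! k + 2 * n" if k: "Suc k < length R" for k
  proof -
    have "k < p" using k lenR by simp
    hence "real (R ! (k + 1)) - real (R ! k) \<le> real (2 * n)"
      using tb len unfolding two_balanced_def Let_def R_def ratio by auto
    then show ?thesis by simp
  qed
  define a where "a = q * (p * L)"
  have aL: "a + p * L \<le> p * n"
  proof -
    have "a + p * L = Suc q * (p * L)" by (simp add: a_def)
    also have "\<dots> \<le> d * (p * L)" using q by (intro mult_le_mono1) simp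
    also have "\<dots> \<le> p * n" using dL_le by (metis mult.left_commute mult_le_mono2)
    finally show ?thesis .
  qed
  have nL: "2 * n < p * L" using hL hp L_pos by (meson le_less_trans mult_less_mono1)
  have Rp: "R ! p = p * n" using len p by (cases p) (auto simp: R_def rs_def nth_append)
  have lastR: "a + 2 * n < R ! (length R - 1)" using lenR aL nL Rp by simp
  obtain x where xR: "x \<in> set R" and ax: "a < x" and xa: "x \<le> a + 2 * n"
    using chain_hit[of R "2 * n" a] stepR lastR by (auto simp: R_def)
  have "x \<in> set rs" using xR ax xa aL nL by (auto simp: R_def)
  then obtain i j where ij: "(i, j) \<in> set out" and x: "x = rk p n d A i j"
    by (auto simp: rs_def)
  have ijS: "(i, j) \<in> S" using ij outS by auto
  hence i: "i < p" and j: "j < n" using S unfolding S_def positions_def nd by auto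
  have jlow: "j < d * L"
  proof (rule ccontr)
    assume "\<not> j < d * L"
    hence "d * (p * L) < x" using rk_high_bounds(1)[OF i _ j] x by simp
    moreover have "a + p * L \<le> d * (p * L)"
    proof -
      have "a + p * L = Suc q * (p * L)" by (simp add: a_def)
      also have "\<dots> \<le> d * (p * L)" using q by (intro mult_le_mono1) simp
      finally show ?thesis .
    qed
    ultimately show False using xa nL by simp
  qed
  have qj: "j div L = q"
  proof (rule ccontr)
    assume ne: "j div L \<noteq> q"
    show False
    proof (cases "j div L < q")
      case True
      have "x \<le> (j div L) * (p * L) + p * L" using rk_low_bounds(2)[OF i jlow] x by simp
      also have "\<dots> = Suc (j div L) * (p * L)" by simp
      also have "\<dots> \<le> a" unfolding a_def using True by (intro mult_le_mono1) simp
      finally show False using ax by simp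
    next
      case False
      hence "Suc q \<le> j div L" using ne by simp
      hence "Suc q * (p * L) \<le> (j div L) * (p * L)" by (intro mult_le_mono1)
      hence "a + p * L < x" using rk_low_bounds(1)[OF i jlow] x by (simp add: a_def)
      then show False using xa nL by simp
    qed
  qed
  have "pos (A q) p i * L + j mod L + 1 \<le> card (A q) * L"
    using rk_low(1)[OF i jlow] x xa hL qj by (simp add: a_def)
  hence "pos (A q) p i * L < card (A q) * L" by linarith
  hence "pos (A q) p i < card (A q)" using mult_less_cancel2 by blast
  hence iA: "i \<in> A q" using pos_lt_card_iff[OF A_sub[OF q] i] by simp
  have "q * L \<le> j" "j < q * L + L" using qj L_pos
    by (metis div_times_less_eq_dividend) (metis qj L_pos dividend_less_div_times add.commute)
  hence "i \<in> Tq L (fst st) q" using ijS by (auto simp: Tq_def S_def)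
  then show ?thesis using iA by blast
qed

end

definition Bal :: "nat \<Rightarrow> nat \<Rightarrow> nat set set" where
  "Bal p h = {A. A \<subseteq> {..<p} \<and> card A = h}"

lemma card_Bal: "card (Bal p h) = p choose h"
  using n_subsets[of "{..<p}" h] by (simp add: Bal_def)

lemma finite_Bal: "finite (Bal p h)"
  unfolding Bal_def by (rule finite_subset[of _ "Pow {..<p}"]) auto

lemma card_hit:
  assumes T: "T \<subseteq> {..<p}"
  shows "card {A \<in> Bal p h. A \<inter> T \<noteq> {}} + ((p - card T) choose h) = p choose h"
proof -
  have fT: "finite T" using T finite_subset by blast
  have e: "{A \<in> Bal p h. A \<inter> T = {}} = {A. A \<subseteq> {..<p} - T \<and> card A = h}"
    unfolding Bal_def by auto
  have c2: "card {A \<in> Bal p h. A \<inter> T = {}} = (p - card T) choose h"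
    unfolding e using n_subsets[of "{..<p} - T" h] T fT by (simp add: card_Diff_subset)
  have u: "Bal p h = {A \<in> Bal p h. A \<inter> T \<noteq> {}} \<union> {A \<in> Bal p h. A \<inter> T = {}}" by auto
  have "card (Bal p h) = card {A \<in> Bal p h. A \<inter> T \<noteq> {}} + card {A \<in> Bal p h. A \<inter> T = {}}"
  proof -
    have f1: "finite {A \<in> Bal p h. A \<inter> T \<noteq> {}}" "finite {A \<in> Bal p h. A \<inter> T = {}}"
      using finite_Bal by auto
    have "card ({A \<in> Bal p h. A \<inter> T \<noteq> {}} \<union> {A \<in> Bal p h. A \<inter> T = {}}) = card {A \<in> Bal p h. A \<inter> T \<noteq> {}} + card {A \<in> Bal p h. A \<inter> T = {}}"
      by (rule card_Un_disjoint[OF f1]) blast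
    then show ?thesis using u by simp
  qed
  then show ?thesis using c2 card_Bal by simp
qed

lemma binom_step:
  fixes m h :: nat
  assumes "4 * h \<le> 3 * m"
  shows "m choose h \<le> 4 * ((m - 1) choose h)"
proof (cases "m = 0")
  case True
  then show ?thesis using assms by simp
next
  case False
  have "m * (m choose h) \<le> (4 * (m - h)) * (m choose h)" using assms by (intro mult_le_mono1) simp
  also have "\<dots> = 4 * ((m - h) * (m choose h))" by simp
  also have "\<dots> = m * (4 * ((m - 1) choose h))" by (simp add: binomial_absorb_comp)
  finally have "m * (m choose h) \<le> m * (4 * ((m - 1) choose h))" .
  then show ?thesis using False by (simp only: mult_le_cancel1)
qed

lemma binom_pow:
  fixes p h t :: nat
  assumes "\<And>i. i < t \<Longrightarrow> 4 * h \<le> 3 * (p - i)"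
  shows "p choose h \<le> 4 ^ t * ((p - t) choose h)"
  using assms
proof (induction t)
  case 0 then show ?case by simp
next
  case (Suc t)
  have "p choose h \<le> 4 ^ t * ((p - t) choose h)" using Suc by simp
  also have "\<dots> \<le> 4 ^ t * (4 * ((p - t - 1) choose h))"
    using binom_step[of h "p - t"] Suc.prems[of t] by simp
  also have "\<dots> = 4 ^ Suc t * ((p - Suc t) choose h)" by simp
  finally show ?case .
qed

lemma sum_Tq:
  assumes fS: "finite S" and L: "0 < L"
  shows "(\<Sum>q<d. card (Tq L S q)) \<le> card S"
proof -
  have fin: "finite (Tq L S q)" for q
  proof (rule finite_subset[of _ "fst ` S"])
    show "Tq L S q \<subseteq> fst ` S"
    proof
      fix i assume "i \<in> Tq L S q"
      then obtain j where "(i, j) \<in> S" by (auto simp: Tq_def)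
      then show "i \<in> fst ` S" by (rule rev_image_eqI) simp
    qed
  qed (use fS in simp)
  have "Sigma {..<d} (Tq L S) \<subseteq> (\<lambda>(i, j). (j div L, i)) ` S"
  proof
    fix x assume "x \<in> Sigma {..<d} (Tq L S)"
    then obtain q i j where x: "x = (q, i)" and ij: "(i, j) \<in> S" and j: "q * L \<le> j" "j < q * L + L"
      by (auto simp: Tq_def)
    have "j div L = q" using j by (intro div_nat_eqI) (auto simp: algebra_simps)
    then show "x \<in> (\<lambda>(i, j). (j div L, i)) ` S" using x ij by force
  qed
  hence "card (Sigma {..<d} (Tq L S)) \<le> card ((\<lambda>(i, j). (j div L, i)) ` S)"
    by (intro card_mono) (use fS in auto)
  also have "\<dots> \<le> card S" by (rule card_image_le[OF fS])
  finally show ?thesis using card_SigmaI[of "{..<d}" "Tq L S"] fin by simp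
qed

lemma count_bound:
  assumes p: "0 < p" and d: "0 < d" and dn: "d \<le> n" and hp: "h < p"
    and hL: "2 * n \<le> h * (n div d)" and S: "fst st \<subseteq> positions (p * n) p"
  shows "card {c \<in> PiE {..<d} (\<lambda>_. Bal p h). succeeds (p * n) p (rk p n d c) st}
         \<le> (\<Prod>q<d. card {A \<in> Bal p h. A \<inter> Tq (n div d) (fst st) q \<noteq> {}})"
proof -
  have sub: "{c \<in> PiE {..<d} (\<lambda>_. Bal p h). succeeds (p * n) p (rk p n d c) st}
      \<subseteq> PiE {..<d} (\<lambda>q. {A \<in> Bal p h. A \<inter> Tq (n div d) (fst st) q \<noteq> {}})"
  proof
    fix c assume c: "c \<in> {c \<in> PiE {..<d} (\<lambda>_. Bal p h). succeeds (p * n) p (rk p n d c) st}"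
    hence cP: "c \<in> PiE {..<d} (\<lambda>_. Bal p h)" and sc: "succeeds (p * n) p (rk p n d c) st" by auto
    have cq: "c q \<in> Bal p h" if "q < d" for q using cP that by (auto simp: PiE_def Pi_def)
    interpret cfg p n d c
      by unfold_locales (use d dn cq in \<open>auto simp: Bal_def\<close>)
    have "c q \<inter> Tq (n div d) (fst st) q \<noteq> {}" if q: "q < d" for q
    proof -
      have cc: "card (c q) = h" using cq[OF q] by (simp add: Bal_def)
      show ?thesis using succ_hit[OF p q _ _ S sc] cc hL hp by (simp add: L_def)
    qed
    then show "c \<in> PiE {..<d} (\<lambda>q. {A \<in> Bal p h. A \<inter> Tq (n div d) (fst st) q \<noteq> {}})"
      using cP cq by (auto simp: PiE_def Pi_def)
  qed
  have "card {c \<in> PiE {..<d} (\<lambda>_. Bal p h). succeeds (p * n) p (rk p n d c) st}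
      \<le> card (PiE {..<d} (\<lambda>q. {A \<in> Bal p h. A \<inter> Tq (n div d) (fst st) q \<noteq> {}}))"
    by (rule card_mono[OF _ sub]) (intro finite_PiE, auto intro: finite_subset[OF _ finite_Bal])
  also have "\<dots> = (\<Prod>q<d. card {A \<in> Bal p h. A \<inter> Tq (n div d) (fst st) q \<noteq> {}})"
    by (rule card_PiE) simp
  finally show ?thesis .
qed

lemma prod_bound:
  fixes g t :: "nat \<Rightarrow> nat" and B \<tau> :: nat and x :: real
  assumes "\<And>q. q < d \<Longrightarrow> g q \<le> B" "\<And>q. q < d \<Longrightarrow> t q \<le> \<tau> \<Longrightarrow> real (g q) \<le> real B * x"
    and "0 \<le> x"
  shows "(\<Prod>q<d. real (g q)) \<le> real B ^ d * x ^ card {q. q < d \<and> t q \<le> \<tau>}"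
proof -
  have "(\<Prod>q<d. real (g q)) \<le> (\<Prod>q<d. real B * (if t q \<le> \<tau> then x else 1))"
    by (rule prod_mono) (use assms in auto)
  also have "\<dots> = real B ^ d * (\<Prod>q<d. (if t q \<le> \<tau> then x else 1))"
    by (simp add: prod.distrib)
  also have "(\<Prod>q<d. (if t q \<le> \<tau> then x else 1)) = x ^ card {q. q < d \<and> t q \<le> \<tau>}"
  proof -
    have "(\<Prod>q<d. (if t q \<le> \<tau> then x else 1)) = (\<Prod>q\<in>{q. q < d \<and> t q \<le> \<tau>}. x)"
      by (rule prod.mono_neutral_cong_right) auto
    then show ?thesis by simp
  qed
  finally show ?thesis .
qed

lemma yao:
  fixes A :: "'a pmf" and E :: "'b \<Rightarrow> 'a set" and C :: "'b set" and \<rho> :: real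
  assumes fC: "finite C" and neC: "C \<noteq> {}"
    and big: "\<And>c. c \<in> C \<Longrightarrow> measure_pmf.prob A (E c) > \<rho>"
    and small: "\<And>st. st \<in> set_pmf A \<Longrightarrow> real (card {c\<in>C. st \<in> E c}) \<le> \<rho> * real (card C)"
  shows False
proof -
  have "(\<Sum>c\<in>C. \<rho>) < (\<Sum>c\<in>C. measure_pmf.prob A (E c))"
    by (rule sum_strict_mono[OF fC neC]) (use big in auto)
  hence lt: "\<rho> * real (card C) < (\<Sum>c\<in>C. measure_pmf.prob A (E c))" by (simp add: mult.commute)
  have ind: "(\<Sum>c\<in>C. indicator (E c) x) = real (card {c\<in>C. x \<in> E c})" for x :: 'a
  proof -
    have "(\<Sum>c\<in>C. indicator (E c) x :: real) = (\<Sum>c\<in>{c\<in>C. x \<in> E c}. 1)"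
      by (rule sum.mono_neutral_cong_right) (use fC in \<open>auto simp: indicator_def\<close>)
    then show ?thesis by simp
  qed
  have int: "integrable (measure_pmf A) (indicator (E c) :: 'a \<Rightarrow> real)" for c
    by (rule measure_pmf.integrable_const_bound[where B=1]) (auto simp: indicator_def)
  have "(\<Sum>c\<in>C. measure_pmf.prob A (E c)) = (\<Sum>c\<in>C. \<integral>x. indicator (E c) x \<partial>measure_pmf A)"
    by simp
  also have "\<dots> = (\<integral>x. (\<Sum>c\<in>C. indicator (E c) x) \<partial>measure_pmf A)"
    using Bochner_Integration.integral_sum[where M="measure_pmf A" and I=C and f="\<lambda>c. indicator (E c)"] int by simp
  also have "\<dots> = (\<integral>x. real (card {c\<in>C. x \<in> E c}) \<partial>measure_pmf A)"
    by (simp add: ind)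
  also have "\<dots> \<le> \<rho> * real (card C)"
  proof (rule measure_pmf.integral_le_const)
    show "integrable (measure_pmf A) (\<lambda>x. real (card {c\<in>C. x \<in> E c}))"
    proof (rule measure_pmf.integrable_const_bound[where B="real (card C)"])
      show "AE x in measure_pmf A. norm (real (card {c\<in>C. x \<in> E c})) \<le> real (card C)"
        using fC by (auto intro!: card_mono)
    qed simp
    show "AE x in measure_pmf A. real (card {c\<in>C. x \<in> E c}) \<le> \<rho> * real (card C)"
      using small by (simp add: AE_measure_pmf_iff)
  qed
  finally show False using lt by simp
qed

lemma four_pow_le_sqrt:
  fixes p :: nat and \<tau> :: nat
  assumes p: "1 \<le> p" and t: "real \<tau> \<le> ln (real p) / 4"
  shows "real (4 ^ \<tau>) \<le> sqrt (real p)"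
proof -
  have l4: "ln (4::real) \<le> 2"
  proof -
    have "ln (4::real) = ln 2 + ln 2" using ln_mult[of 2 2] by simp
    then show ?thesis using ln_2_less_1 by simp
  qed
  have "real (4 ^ \<tau>) = exp (real \<tau> * ln 4)"
    by (simp add: exp_of_nat_mult)
  also have "\<dots> \<le> exp (ln (real p) / 2)"
  proof -
    have lp: "0 \<le> ln (real p)" using p by simp
    have "real \<tau> * ln 4 \<le> (ln (real p) / 4) * 2"
      by (rule mult_mono) (use t l4 lp in auto)
    then show ?thesis by simp
  qed
  also have "\<dots> = sqrt (real p)"
  proof -
    have "sqrt (real p) = real p powr (1/2)" using powr_half_sqrt[of "real p"] by simp
    also have "\<dots> = exp (ln (real p) / 2)" using p by (simp add: powr_def)
    finally show ?thesis by simp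
  qed
  finally show ?thesis .
qed

lemma final_ineq:
  fixes p G :: nat and \<rho> :: real
  assumes p: "1 \<le> p" and G: "real p / 32 \<le> real G" and \<rho>: "0 < \<rho>"
    and pbig: "(32 * ln (1 / \<rho>))\<^sup>2 \<le> real p"
  shows "(1 - 1 / sqrt (real p)) ^ G \<le> \<rho>"
proof -
  define s where "s = sqrt (real p)"
  have s0: "0 < s" using p by (simp add: s_def)
  have ss: "s * s = real p" using p by (simp add: s_def)
  have s1: "1 \<le> s" using p by (simp add: s_def)
  have "(1 - 1 / s) ^ G \<le> exp (- (1 / s)) ^ G"
    by (rule power_mono) (use exp_ge_add_one_self[of "- (1/s)"] s1 in \<open>auto simp: divide_simps\<close>)
  also have "\<dots> = exp (- (real G / s))" by (simp add: exp_of_nat_mult[symmetric])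
  also have "\<dots> \<le> exp (- (s / 32))"
  proof -
    have "s / 32 = (real p / 32) / s" using ss s0 by (simp add: field_simps)
    also have "\<dots> \<le> real G / s" using G s0 by (intro divide_right_mono) simp_all
    finally show ?thesis by simp
  qed
  also have "\<dots> \<le> exp (ln \<rho>)"
  proof -
    have "32 * ln (1 / \<rho>) \<le> \<bar>32 * ln (1 / \<rho>)\<bar>" by simp
    also have "\<dots> = sqrt ((32 * ln (1 / \<rho>))\<^sup>2)" by (rule real_sqrt_abs[symmetric])
    also have "\<dots> \<le> s" unfolding s_def using pbig by (rule real_sqrt_le_mono)
    finally have "32 * ln (1 / \<rho>) \<le> s" .
    moreover have "ln (1 / \<rho>) = - ln \<rho>" using \<rho> by (simp add: ln_div)
    ultimately show ?thesis by simp
  qed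
  also have "\<dots> = \<rho>" using \<rho> by simp
  finally show ?thesis by (simp add: s_def)
qed

lemma main_case:
  fixes \<rho> :: real and p N :: nat and A :: "strategy pmf"
  assumes \<rho>: "0 < \<rho>"
    and p16: "16 \<le> p" and pbig: "(32 * ln (1 / \<rho>))\<^sup>2 \<le> real p"
    and NN: "p * p \<le> N" and dvd: "p dvd N"
    and supp: "\<forall>st \<in> set_pmf A. fst st \<subseteq> positions N p"
    and prob: "\<forall>r. valid_input N p r \<longrightarrow> measure_pmf.prob A {st. succeeds N p r st} > \<rho>"
  shows "\<exists>st \<in> set_pmf A. real (card (fst st)) \<ge> 1/128 * real p * ln (real p)"
proof (rule ccontr)
  assume "\<not> ?thesis"
  hence small: "\<And>st. st \<in> set_pmf A \<Longrightarrow> real (card (fst st)) < 1/128 * real p * ln (real p)"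
    by (simp add: not_le)
  obtain n where N: "N = p * n" using dvd by blast
  have p0: "0 < p" using p16 by simp
  have np: "p \<le> n" using NN N p0 by simp
  define d where "d = p div 8"
  define h where "h = 4 * d"
  define L where "L = n div d"
  define \<tau> where "\<tau> = nat \<lfloor>ln (real p) / 4\<rfloor>"
  define B where "B = p choose h"
  have d2: "2 \<le> d" using p16 by (simp add: d_def)
  have d8: "8 * d \<le> p" by (simp add: d_def)
  have dreal: "real p / 16 \<le> real d"
  proof -
    have "p < 8 * d + 8" unfolding d_def by linarith
    then show ?thesis using p16 by simp
  qed
  have hp: "h < p" using d8 d2 by (simp add: h_def)
  have h2: "2 * h \<le> p" using d8 by (simp add: h_def)
  have dn: "d \<le> n" using d8 np by simp
  have Lpos: "0 < L" using dn d2 by (simp add: L_def div_greater_zero_iff)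
  have hL: "2 * n \<le> h * L"
  proof -
    have e: "n = d * L + n mod d" by (simp add: L_def)
    have "n mod d < d" using d2 by simp
    moreover have "d \<le> d * L" using Lpos by simp
    ultimately have "n \<le> 2 * (d * L)" using e by linarith
    hence "2 * n \<le> 4 * (d * L)" by linarith
    then show ?thesis by (simp only: h_def mult.assoc)
  qed
  have lnp: "0 < ln (real p)" using p16 by simp
  have tau_eq: "real \<tau> = real_of_int \<lfloor>ln (real p) / 4\<rfloor>" using lnp by (simp add: \<tau>_def)
  have tau_le: "real \<tau> \<le> ln (real p) / 4"
    using of_int_floor_le[of "ln (real p) / 4"] tau_eq by linarith
  have tau_ge: "ln (real p) / 4 < real \<tau> + 1" using lnp using tau_eq by linarith
  have tau3: "3 * \<tau> \<le> p"
  proof -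
    have "ln (real p) \<le> real p - 1" using p0 by (intro ln_le_minus_one) simp
    then have "real (3 * \<tau>) \<le> real p" using tau_le by simp
    then show ?thesis by linarith
  qed
  have four: "real (4 ^ \<tau>) \<le> sqrt (real p)" using four_pow_le_sqrt[of p \<tau>] p0 tau_le by simp
  define Cfg where "Cfg = PiE {..<d} (\<lambda>_. Bal p h)"
  have fCfg: "finite Cfg" unfolding Cfg_def by (intro finite_PiE) (auto simp: finite_Bal)
  have cardCfg: "card Cfg = B ^ d" unfolding Cfg_def B_def by (simp add: card_PiE card_Bal)
  have neCfg: "Cfg \<noteq> {}"
  proof -
    have "(\<lambda>q\<in>{..<d}. {..<h}) \<in> Cfg" unfolding Cfg_def using hp by (auto simp: Bal_def)
    then show ?thesis by blast
  qed
  show False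
  proof (rule yao[OF fCfg neCfg, where A=A and \<rho>=\<rho> and E="\<lambda>c. {st. succeeds N p (rk p n d c) st}"])
    fix c assume c: "c \<in> Cfg"
    have "cfg p n d c" unfolding cfg_def using d2 dn c by (auto simp: Cfg_def Bal_def PiE_def Pi_def)
    hence "valid_input N p (rk p n d c)" using cfg.rk_valid[of p n d c] p0 N by simp
    then show "\<rho> < measure_pmf.prob A {st. succeeds N p (rk p n d c) st}" using prob by simp
  next
    fix st assume st: "st \<in> set_pmf A"
    define S where "S = fst st"
    have SP: "S \<subseteq> positions (p * n) p" using supp st N by (simp add: S_def)
    have fS: "finite S"
      by (rule finite_subset[OF SP]) (simp add: positions_def)
    have cS: "real (card S) < 1/128 * real p * ln (real p)" using small[OF st] by (simp add: S_def)
    define t where "t q = card (Tq L S q)" for q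
    define g where "g q = card {A \<in> Bal p h. A \<inter> Tq L S q \<noteq> {}}" for q
    have Tsub: "Tq L S q \<subseteq> {..<p}" for q
      using SP p0 by (auto simp: Tq_def positions_def)
    have ghit: "g q + ((p - t q) choose h) = B" for q
      unfolding g_def t_def B_def by (rule card_hit[OF Tsub])
    have gB: "g q \<le> B" for q using ghit[of q] by linarith
    define x where "x = 1 - 1 / sqrt (real p)"
    have x0: "0 \<le> x" using p0 by (simp add: x_def)
    have gx: "real (g q) \<le> real B * x" if tq: "t q \<le> \<tau>" for q
    proof -
      have "B \<le> 4 ^ t q * ((p - t q) choose h)"
        unfolding B_def
      proof (rule binom_pow)
        fix i assume "i < t q"
        hence "3 * i \<le> p" using tq tau3 by linarith
        moreover have "3 * (p - i) = 3 * p - 3 * i" by (simp add: diff_mult_distrib2)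
        ultimately show "4 * h \<le> 3 * (p - i)" using h2 by linarith
      qed
      also have "\<dots> \<le> 4 ^ \<tau> * ((p - t q) choose h)"
        by (intro mult_le_mono1 power_increasing tq) simp
      finally have "real B \<le> real (4 ^ \<tau>) * real ((p - t q) choose h)" by (simp only: of_nat_mult[symmetric] of_nat_le_iff)
      also have "\<dots> \<le> sqrt (real p) * real ((p - t q) choose h)" by (rule mult_right_mono[OF four]) simp
      finally have C: "real B / sqrt (real p) \<le> real ((p - t q) choose h)" using p0
        by (simp add: divide_simps mult.commute)
      have "real (g q) = real B - real ((p - t q) choose h)" using ghit[of q] by (simp add: of_nat_add[symmetric])
      also have "\<dots> \<le> real B - real B / sqrt (real p)" using C by simp
      also have "\<dots> = real B * x" by (simp add: x_def algebra_simps)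
      finally show ?thesis .
    qed
    define Gs where "Gs = {q. q < d \<and> t q \<le> \<tau>}"
    define Bs where "Bs = {q. q < d \<and> \<not> t q \<le> \<tau>}"
    have GB: "card Gs + card Bs = d"
    proof -
      have "card (Gs \<union> Bs) = card Gs + card Bs"
        by (rule card_Un_disjoint) (auto simp: Gs_def Bs_def)
      moreover have "Gs \<union> Bs = {..<d}" by (auto simp: Gs_def Bs_def)
      ultimately show ?thesis by simp
    qed
    have "card Bs * (\<tau> + 1) \<le> sum t Bs"
      using sum_bounded_below[of Bs "\<tau> + 1" t] by (auto simp: Bs_def)
    also have "\<dots> \<le> sum t {..<d}" by (rule sum_mono2) (auto simp: Bs_def)
    also have "\<dots> \<le> card S" unfolding t_def by (rule sum_Tq[OF fS Lpos])
    finally have "real (card Bs) * (real \<tau> + 1) \<le> real (card S)" by (metis of_nat_1 of_nat_add of_nat_le_iff of_nat_mult)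
    hence Bsl: "real (card Bs) * (real \<tau> + 1) < real p * ln (real p) / 128" using cS by simp
    have Bsp: "real (card Bs) < real p / 32"
    proof (rule ccontr)
      assume "\<not> ?thesis"
      hence "real p / 32 \<le> real (card Bs)" by simp
      hence "real p / 32 * (ln (real p) / 4) \<le> real (card Bs) * (real \<tau> + 1)"
        using tau_ge lnp by (intro mult_mono) auto
      then show False using Bsl by simp
    qed
    have Gl: "real p / 32 \<le> real (card Gs)" using GB Bsp dreal by (simp only: of_nat_add[symmetric])
    have "real (card {c \<in> Cfg. st \<in> {st. succeeds N p (rk p n d c) st}})
          \<le> real (\<Prod>q<d. g q)"
    proof -
      have hL': "2 * n \<le> h * (n div d)" using hL by (simp add: L_def)
      have d0: "0 < d" using d2 by simp
      have SP': "fst st \<subseteq> positions (p * n) p" using SP by (simp add: S_def)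
      have cb: "card {c \<in> PiE {..<d} (\<lambda>_. Bal p h). succeeds (p * n) p (rk p n d c) st}
         \<le> (\<Prod>q<d. card {A \<in> Bal p h. A \<inter> Tq (n div d) (fst st) q \<noteq> {}})"
        by (rule count_bound[OF p0 d0 dn hp hL' SP'])
      have "card {c \<in> Cfg. st \<in> {st. succeeds N p (rk p n d c) st}} \<le> (\<Prod>q<d. g q)"
        using cb unfolding Cfg_def g_def S_def L_def N by simp
      then show ?thesis by (simp only: of_nat_le_iff)
    qed
    also have "\<dots> = (\<Prod>q<d. real (g q))" by simp
    also have "\<dots> \<le> real B ^ d * x ^ card Gs"
      unfolding Gs_def by (rule prod_bound) (use gB gx x0 in auto)
    also have "\<dots> \<le> real B ^ d * \<rho>"
      using final_ineq[of p "card Gs" \<rho>] p0 Gl \<rho> pbig unfolding x_def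
      by (intro mult_left_mono) auto
    also have "\<dots> = \<rho> * real (card Cfg)" by (simp add: cardCfg)
    finally show "real (card {c \<in> Cfg. st \<in> {st. succeeds N p (rk p n d c) st}}) \<le> \<rho> * real (card Cfg)" .
  qed
qed

theorem theorem3p9:
  fixes \<rho> :: real
  assumes "0 < \<rho>" and "\<rho> < 1"
  shows "\<exists>c > 0. \<exists>p0. \<forall>p \<ge> p0. \<exists>N0. \<forall>N \<ge> N0. p dvd N \<longrightarrow>
           (\<forall>A :: strategy pmf.
              (\<forall>st \<in> set_pmf A. fst st \<subseteq> positions N p) \<longrightarrow>
              (\<forall>r. valid_input N p r \<longrightarrow>
                   measure_pmf.prob A {st. succeeds N p r st} > \<rho>) \<longrightarrow>
              (\<exists>st \<in> set_pmf A. real (card (fst st)) \<ge> c * real p * ln (real p)))"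
proof (rule exI[of _ "1/128::real"], rule conjI)
  show "(0::real) < 1/128" by simp
  show "\<exists>p0. \<forall>p \<ge> p0. \<exists>N0. \<forall>N \<ge> N0. p dvd N \<longrightarrow>
           (\<forall>A :: strategy pmf.
              (\<forall>st \<in> set_pmf A. fst st \<subseteq> positions N p) \<longrightarrow>
              (\<forall>r. valid_input N p r \<longrightarrow>
                   measure_pmf.prob A {st. succeeds N p r st} > \<rho>) \<longrightarrow>
              (\<exists>st \<in> set_pmf A. real (card (fst st)) \<ge> 1/128 * real p * ln (real p)))"
  proof (rule exI[of _ "max 16 (nat \<lceil>(32 * ln (1 / \<rho>))\<^sup>2\<rceil>)"], intro allI impI)
    fix p :: nat assume pp: "max 16 (nat \<lceil>(32 * ln (1 / \<rho>))\<^sup>2\<rceil>) \<le> p"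
    have p16: "16 \<le> p" using pp by simp
    have pbig: "(32 * ln (1 / \<rho>))\<^sup>2 \<le> real p"
    proof -
      have "nat \<lceil>(32 * ln (1 / \<rho>))\<^sup>2\<rceil> \<le> p" using pp by simp
      hence "real (nat \<lceil>(32 * ln (1 / \<rho>))\<^sup>2\<rceil>) \<le> real p" by (rule of_nat_mono)
      moreover have "(32 * ln (1 / \<rho>))\<^sup>2 \<le> real (nat \<lceil>(32 * ln (1 / \<rho>))\<^sup>2\<rceil>)" by (rule real_nat_ceiling_ge)
      ultimately show ?thesis by linarith
    qed
    show "\<exists>N0. \<forall>N \<ge> N0. p dvd N \<longrightarrow>
           (\<forall>A :: strategy pmf.
              (\<forall>st \<in> set_pmf A. fst st \<subseteq> positions N p) \<longrightarrow>
              (\<forall>r. valid_input N p r \<longrightarrow>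
                   measure_pmf.prob A {st. succeeds N p r st} > \<rho>) \<longrightarrow>
              (\<exists>st \<in> set_pmf A. real (card (fst st)) \<ge> 1/128 * real p * ln (real p)))"
      using main_case[OF assms(1) p16 pbig] by blast
  qed
qed

end
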